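(* The Filtered Greedy Strategy (\texttt{FGS}) is a 3-approximation algorithm for \textbf{LTSP}: for every instance, the set $\mathcal B_1^{\mathrm{FGS}}$ it returns satisfies $v(\mathcal B_1^{\mathrm{FGS}})\le 3\,\mathrm{OPT}$, where $\mathrm{OPT}$ is the minimum total response time of the instance.
   Context: A single-track tape stores a sequence of files $\mathcal F=(f_1,\dots,f_n)$ laid out contiguously from left to right: file $f$ occupies blocks $l(f),\dots,r(f)$, has size $s(f)=r(f)-l(f)+1$, $l(f_1)=1$, $l(f_{i+1})=r(f_i)+1$, and $m=\sum_f s(f)$. The tape moves one block per time step; at time $0$ the head is at position $m$. A file is read when the head traverses it rightwards from $l(f)$ to $r(f)$. $\mathcal R$ is a finite set of requests, all released at time $0$, each associated with a file $f(r)$; $n(f)$ is the number of requests for $f$. A request's response time is the time at which the head starts a rightward reading traversal of its file (all pending requests of a file are serviced simultaneously). \textbf{LTSP} asks for a head movement minimizing the sum of response times. For files, $f'<f$ means $l(f')<l(f)$. A mini-batch is a pair $b=(f,f')$ of files with $l(f)\le l(f')$; $l(b)=l(f)$, $r(b)=r(f')$, $s(b)=r(b)-l(b)+1$, $\mathcal F(b)$ is the set of files $g$ with $l(b)\le l(g)$, $r(g)\le r(b)$; for a set $\mathcal B_1$, $\mathcal F(\mathcal B_1)=\bigcup_{b\in\mathcal B_1}\mathcal F(b)$, and $b<f$ means $l(b)<l(f)$. Given $\mathcal B_1$, its schedule is: Phase 1, the head moves leftwards from $m$ to $1$, and upon reaching $l(b)$ for $b\in\mathcal B_1$ executes $b$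 (moves rightwards to $r(b)$, reading all files of $\mathcal F(b)$, and returns to $l(b)$), then continues leftwards; Phase 2, the head moves rightwards from $1$ to $m$ reading every file; $v(\mathcal B_1)$ is its total response time. The Greedy Strategy (\texttt{GS}) returns $\{(f,f): f\in\mathcal F\setminus\{f_1\},\ n(f)>0\}$. \texttt{FGS} starts with $\mathcal B_1$ equal to the output of \texttt{GS} and then, for $|\mathcal F|$ rounds, for each file $f\in\mathcal F(\mathcal B_1)$ (with the current $\mathcal B_1$) removes $(f,f)$ from $\mathcal B_1$ whenever $n(f)\bigl(l(f)+\sum_{b\in\mathcal B_1,\ b<f}s(b)\bigr) < s(f)\bigl(\sum_{f'\in\mathcal F,\ f'<f}n(f')+\sum_{f'\in\mathcal F\setminus\mathcal F(\mathcal B_1),\ f'>f}n(f')\bigr)$; it returns the final $\mathcal B_1$. *)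

theory Defs
  imports Main
begin

text \<open>
Files are indexed 0,...,N-1 (index i stands for f_{i+1}); s i is the size of file i.
Head positions are block indices (integers); the head moves at most one block per time step.
\<close>

definition lft :: "(nat \<Rightarrow> nat) \<Rightarrow> nat \<Rightarrow> nat" where
  "lft s i = 1 + (\<Sum>j<i. s j)"

definition rgt :: "(nat \<Rightarrow> nat) \<Rightarrow> nat \<Rightarrow> nat" where
  "rgt s i = lft s i + s i - 1"

definition tape_len :: "nat \<Rightarrow> (nat \<Rightarrow> nat) \<Rightarrow> nat" where
  "tape_len N s = (\<Sum>j<N. s j)"

definition nreq :: "'r set \<Rightarrow> ('r \<Rightarrow> nat) \<Rightarrow> nat \<Rightarrow> nat" where
  "nreq R ff i = card {q\<in>R. ff q = i}"

definition reads_at :: "(nat \<Rightarrow> nat) \<Rightarrow> (nat \<Rightarrow> int) \<Rightarrow> nat \<Rightarrow> nat \<Rightarrow> bool" where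
  "reads_at s p i t \<longleftrightarrow> (\<forall>k<s i. p (t + k) = int (lft s i + k))"

definition resp_time :: "(nat \<Rightarrow> nat) \<Rightarrow> (nat \<Rightarrow> int) \<Rightarrow> nat \<Rightarrow> nat" where
  "resp_time s p i = (LEAST t. reads_at s p i t)"

definition total_resp :: "(nat \<Rightarrow> nat) \<Rightarrow> 'r set \<Rightarrow> ('r \<Rightarrow> nat) \<Rightarrow> (nat \<Rightarrow> int) \<Rightarrow> nat" where
  "total_resp s R ff p = (\<Sum>q\<in>R. resp_time s p (ff q))"

definition feasible_mv :: "nat \<Rightarrow> (nat \<Rightarrow> nat) \<Rightarrow> 'r set \<Rightarrow> ('r \<Rightarrow> nat) \<Rightarrow> (nat \<Rightarrow> int) \<Rightarrow> bool" where
  "feasible_mv N s R ff p \<longleftrightarrow>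
     p 0 = int (tape_len N s) \<and>
     (\<forall>t. \<bar>p (Suc t) - p t\<bar> \<le> 1) \<and>
     (\<forall>t. 1 \<le> p t \<and> p t \<le> int (tape_len N s)) \<and>
     (\<forall>q\<in>R. \<exists>t. reads_at s p (ff q) t)"

definition OPT :: "nat \<Rightarrow> (nat \<Rightarrow> nat) \<Rightarrow> 'r set \<Rightarrow> ('r \<Rightarrow> nat) \<Rightarrow> nat" where
  "OPT N s R ff = (INF p \<in> {p. feasible_mv N s R ff p}. total_resp s R ff p)"

(* mini-batches b = (f, f'), f \<le> f' as file indices; l(b) = l(f), r(b) = r(f') *)
definition excursion :: "int \<Rightarrow> int \<Rightarrow> int list" where
  "excursion x y = [x+1..y] @ rev [x..y-1]"

definition phase1_at :: "(nat \<Rightarrow> nat) \<Rightarrow> (nat \<times> nat) set \<Rightarrow> int \<Rightarrow> int list" where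
  "phase1_at s B x = x # concat (map (\<lambda>g. excursion x (int (rgt s g)))
       (sorted_list_of_set {snd b |b. b \<in> B \<and> int (lft s (fst b)) = x}))"

definition sched_path :: "nat \<Rightarrow> (nat \<Rightarrow> nat) \<Rightarrow> (nat \<times> nat) set \<Rightarrow> int list" where
  "sched_path N s B =
     concat (map (phase1_at s B) (rev [1..int (tape_len N s)])) @ [2..int (tape_len N s)]"

definition sched_mv :: "nat \<Rightarrow> (nat \<Rightarrow> nat) \<Rightarrow> (nat \<times> nat) set \<Rightarrow> nat \<Rightarrow> int" where
  "sched_mv N s B t = (if t < length (sched_path N s B) then sched_path N s B ! t
                       else int (tape_len N s))"

definition v :: "nat \<Rightarrow> (nat \<Rightarrow> nat) \<Rightarrow> 'r set \<Rightarrow> ('r \<Rightarrow> nat) \<Rightarrow> (nat \<times> nat) set \<Rightarrow> nat" where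
  "v N s R ff B = total_resp s R ff (sched_mv N s B)"

(* Greedy Strategy, as the set of files f with (f,f) in B1 *)
definition GS_files :: "nat \<Rightarrow> 'r set \<Rightarrow> ('r \<Rightarrow> nat) \<Rightarrow> nat set" where
  "GS_files N R ff = {f. 0 < f \<and> f < N \<and> 0 < nreq R ff f}"

definition fgs_check :: "nat \<Rightarrow> (nat \<Rightarrow> nat) \<Rightarrow> 'r set \<Rightarrow> ('r \<Rightarrow> nat) \<Rightarrow> nat \<Rightarrow> nat set \<Rightarrow> nat set" where
  "fgs_check N s R ff f S =
     (if f \<in> S \<and>
         nreq R ff f * (lft s f + (\<Sum>g\<in>{g\<in>S. g < f}. s g))
         < s f * ((\<Sum>g<f. nreq R ff g) + (\<Sum>g\<in>{f<..<N} - S. nreq R ff g))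
      then S - {f} else S)"

definition fgs_round :: "nat \<Rightarrow> (nat \<Rightarrow> nat) \<Rightarrow> 'r set \<Rightarrow> ('r \<Rightarrow> nat) \<Rightarrow> nat set \<Rightarrow> nat set" where
  "fgs_round N s R ff S = fold (fgs_check N s R ff) [0..<N] S"

definition FGS :: "nat \<Rightarrow> (nat \<Rightarrow> nat) \<Rightarrow> 'r set \<Rightarrow> ('r \<Rightarrow> nat) \<Rightarrow> (nat \<times> nat) set" where
  "FGS N s R ff = (\<lambda>f. (f, f)) ` ((fgs_round N s R ff ^^ N) (GS_files N R ff))"

end

theory Submission
  imports Defs
begin

lemma lip_bound:
  assumes "\<forall>t. \<bar>p (Suc t) - p t\<bar> \<le> (1::int)"
  shows "\<bar>p t - p 0\<bar> \<le> int t"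
proof (induction t)
  case 0 then show ?case by simp
next
  case (Suc t)
  have "\<bar>p (Suc t) - p t\<bar> \<le> 1" using assms by blast
  then show ?case using Suc by linarith
qed

lemma lft_le_tape:
  assumes "i < N"
  shows "lft s i + s i \<le> 1 + tape_len N s"
proof -
  have "(\<Sum>j<i. s j) + s i = (\<Sum>j<Suc i. s j)" by simp
  also have "\<dots> \<le> (\<Sum>j<N. s j)"
    by (rule sum_mono2) (use assms in auto)
  finally show ?thesis unfolding lft_def tape_len_def by simp
qed

lemma lft_mono_strict:
  assumes "i < j" "\<forall>k<N. 0 < s k" "j \<le> N"
  shows "lft s i + s i \<le> lft s j"
proof -
  have "(\<Sum>k<i. s k) + s i = (\<Sum>k<Suc i. s k)" by simp
  also have "\<dots> \<le> (\<Sum>k<j. s k)"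
    by (rule sum_mono2) (use assms in auto)
  finally show ?thesis unfolding lft_def by simp
qed

lemma lft_less:
  assumes "i < j" "\<forall>k<N. 0 < s k" "j < N"
  shows "lft s i < lft s j"
proof -
  have "lft s i + s i \<le> lft s j" using lft_mono_strict[OF assms(1,2)] assms by simp
  moreover have "0 < s i" using assms by simp
  ultimately show ?thesis by simp
qed

lemma lft_ge1: "1 \<le> lft s i" unfolding lft_def by simp

lemma resp_lb:
  assumes feas: "feasible_mv N s R ff p" and q: "q \<in> R"
    and pos: "\<forall>i<N. 0 < s i" and lt: "ff q < N"
  shows "tape_len N s - lft s (ff q) \<le> resp_time s p (ff q)"
proof -
  obtain t where "reads_at s p (ff q) t" using feas q unfolding feasible_mv_def by blast
  then have r: "reads_at s p (ff q) (resp_time s p (ff q))"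
    unfolding resp_time_def by (rule LeastI)
  have "0 < s (ff q)" using pos lt by blast
  then have "p (resp_time s p (ff q)) = int (lft s (ff q))"
    using r unfolding reads_at_def by (metis add.right_neutral)
  moreover have "\<bar>p (resp_time s p (ff q)) - p 0\<bar> \<le> int (resp_time s p (ff q))"
    using feas lip_bound unfolding feasible_mv_def by blast
  moreover have "p 0 = int (tape_len N s)" using feas unfolding feasible_mv_def by blast
  ultimately show ?thesis by linarith
qed

definition simple_mv :: "nat \<Rightarrow> nat \<Rightarrow> int" where
  "simple_mv m t = (if t < m then int m - int t else min (int t - int m + 2) (int m))"

lemma simple_feasible:
  assumes pos: "\<forall>i<N. 0 < s i" and Rl: "\<forall>q\<in>R. ff q < N" and N1: "0 < N"
  shows "feasible_mv N s R ff (simple_mv (tape_len N s))"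
proof -
  let ?m = "tape_len N s"
  have m1: "1 \<le> ?m" using lft_le_tape[OF N1, of s] pos N1 unfolding lft_def by auto
  have late: "simple_mv ?m t = min (int t - int ?m + 2) (int ?m)" if "t + 1 \<ge> ?m" for t
    using that m1 unfolding simple_mv_def by auto
  have reads: "reads_at s (simple_mv ?m) i (?m + lft s i - 2)" if "i < N" for i
    unfolding reads_at_def
  proof (intro allI impI)
    fix k assume k: "k < s i"
    have a: "lft s i + s i \<le> 1 + ?m" by (rule lft_le_tape[OF that])
    have b: "1 \<le> lft s i" by (rule lft_ge1)
    have "simple_mv ?m (?m + lft s i - 2 + k) = min (int (?m + lft s i - 2 + k) - int ?m + 2) (int ?m)"
      by (rule late) (use b in auto)
    also have "\<dots> = int (lft s i + k)" using a b k m1 by auto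
    finally show "simple_mv ?m (?m + lft s i - 2 + k) = int (lft s i + k)" .
  qed
  show ?thesis unfolding feasible_mv_def
  proof (intro conjI allI ballI)
    show "simple_mv ?m 0 = int ?m" unfolding simple_mv_def using m1 by auto
  next
    fix t show "\<bar>simple_mv ?m (Suc t) - simple_mv ?m t\<bar> \<le> 1"
      unfolding simple_mv_def using m1 by auto
  next
    fix t show "1 \<le> simple_mv ?m t" unfolding simple_mv_def using m1 by auto
  next
    fix t show "simple_mv ?m t \<le> int ?m" unfolding simple_mv_def using m1 by auto
  next
    fix q assume "q \<in> R"
    then show "\<exists>t. reads_at s (simple_mv ?m) (ff q) t" using reads Rl by blast
  qed
qed

lemma OPT_lb:
  assumes pos: "\<forall>i<N. 0 < s i" and Rl: "\<forall>q\<in>R. ff q < N" and N1: "0 < N"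
  shows "(\<Sum>q\<in>R. tape_len N s - lft s (ff q)) \<le> OPT N s R ff"
  unfolding OPT_def
proof (rule cINF_greatest)
  show "{p. feasible_mv N s R ff p} \<noteq> {}" using simple_feasible[OF assms] by blast
next
  fix p assume "p \<in> {p. feasible_mv N s R ff p}"
  then have f: "feasible_mv N s R ff p" by simp
  show "(\<Sum>q\<in>R. tape_len N s - lft s (ff q)) \<le> total_resp s R ff p"
    unfolding total_resp_def
    by (rule sum_mono) (use resp_lb[OF f _ pos] Rl in blast)
qed


definition Qlhs :: "nat \<Rightarrow> (nat \<Rightarrow> nat) \<Rightarrow> 'r set \<Rightarrow> ('r \<Rightarrow> nat) \<Rightarrow> nat set \<Rightarrow> nat" where
  "Qlhs N s R ff C = (\<Sum>u\<in>GS_files N R ff - C. nreq R ff u * (lft s u + (\<Sum>g\<in>{g\<in>C. g < u}. s g)))"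

definition Qrhs :: "nat \<Rightarrow> (nat \<Rightarrow> nat) \<Rightarrow> 'r set \<Rightarrow> ('r \<Rightarrow> nat) \<Rightarrow> nat set \<Rightarrow> nat" where
  "Qrhs N s R ff C = (\<Sum>u\<in>GS_files N R ff - C. s u * (\<Sum>g<u. nreq R ff g))"

definition Qinv :: "nat \<Rightarrow> (nat \<Rightarrow> nat) \<Rightarrow> 'r set \<Rightarrow> ('r \<Rightarrow> nat) \<Rightarrow> nat set \<Rightarrow> bool" where
  "Qinv N s R ff C \<longleftrightarrow> C \<subseteq> GS_files N R ff \<and> Qlhs N s R ff C \<le> Qrhs N s R ff C"

lemma finite_GS: "finite (GS_files N R ff)"
  unfolding GS_files_def by (rule finite_subset[of _ "{..<N}"]) auto

lemma Qinv_GS: "Qinv N s R ff (GS_files N R ff)"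
  unfolding Qinv_def Qlhs_def Qrhs_def by simp

lemma Qinv_check:
  assumes inv: "Qinv N s R ff C"
    and nz: "\<And>h. N \<le> h \<Longrightarrow> nreq R ff h = 0"
  shows "Qinv N s R ff (fgs_check N s R ff f C)"
proof (cases "f \<in> C \<and>
         nreq R ff f * (lft s f + (\<Sum>g\<in>{g\<in>C. g < f}. s g))
         < s f * ((\<Sum>g<f. nreq R ff g) + (\<Sum>g\<in>{f<..<N} - C. nreq R ff g))")
  case False
  then have "fgs_check N s R ff f C = C" unfolding fgs_check_def by (simp only: if_False)
  then show ?thesis using inv by simp
next
  case True
  let ?n = "nreq R ff"
  let ?G = "GS_files N R ff"
  let ?C' = "C - {f}"
  have fC: "f \<in> C" and cond: "?n f * (lft s f + (\<Sum>g\<in>{g\<in>C. g < f}. s g))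
         < s f * ((\<Sum>g<f. ?n g) + (\<Sum>g\<in>{f<..<N} - C. ?n g))" using True by auto
  have CG: "C \<subseteq> ?G" using inv unfolding Qinv_def by simp
  have res: "fgs_check N s R ff f C = ?C'" using True unfolding fgs_check_def by simp
  have fin: "finite ?G" by (rule finite_GS)
  have GC': "?G - ?C' = insert f (?G - C)" using fC CG by auto
  have fnot: "f \<notin> ?G - C" using fC by simp
  have finGC: "finite (?G - C)" using fin by simp
  define X where "X = (\<Sum>u\<in>{u\<in>?G - C. f < u}. ?n u)"
  have eqf: "{g\<in>?C'. g < f} = {g\<in>C. g < f}" by auto
  have peru: "(\<Sum>g\<in>{g\<in>C. g < u}. s g) = (\<Sum>g\<in>{g\<in>?C'. g < u}. s g) + (if f < u then s f else 0)" for u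
  proof (cases "f < u")
    case True
    have "{g\<in>C. g < u} = insert f {g\<in>?C'. g < u}" using fC True by auto
    moreover have "finite {g\<in>?C'. g < u}" by simp
    ultimately show ?thesis using True by simp
  next
    case False
    then have "{g\<in>C. g < u} = {g\<in>?C'. g < u}" by auto
    then show ?thesis using False by simp
  qed
  have sumX: "(\<Sum>u\<in>?G - C. ?n u * (if f < u then s f else 0)) = s f * X"
  proof -
    have "(\<Sum>u\<in>?G - C. ?n u * (if f < u then s f else 0)) = (\<Sum>u\<in>?G - C. (if f < u then s f * ?n u else 0))"
      by (rule sum.cong) auto
    also have "\<dots> = (\<Sum>u\<in>{u\<in>?G - C. f < u}. s f * ?n u)"
      by (simp only: sum.inter_filter[OF finGC])
    also have "\<dots> = s f * X" unfolding X_def by (simp add: sum_distrib_left)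
    finally show ?thesis .
  qed
  have old: "(\<Sum>u\<in>?G - C. ?n u * (lft s u + (\<Sum>g\<in>{g\<in>?C'. g < u}. s g))) + s f * X = Qlhs N s R ff C"
  proof -
    have "Qlhs N s R ff C = (\<Sum>u\<in>?G - C. ?n u * (lft s u + (\<Sum>g\<in>{g\<in>?C'. g < u}. s g)) + ?n u * (if f < u then s f else 0))"
      unfolding Qlhs_def by (rule sum.cong) (simp_all add: peru algebra_simps)
    also have "\<dots> = (\<Sum>u\<in>?G - C. ?n u * (lft s u + (\<Sum>g\<in>{g\<in>?C'. g < u}. s g))) + s f * X"
      by (simp add: sum.distrib sumX)
    finally show ?thesis by simp
  qed
  have lhs': "Qlhs N s R ff ?C' = ?n f * (lft s f + (\<Sum>g\<in>{g\<in>C. g < f}. s g))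
      + (\<Sum>u\<in>?G - C. ?n u * (lft s u + (\<Sum>g\<in>{g\<in>?C'. g < u}. s g)))"
    unfolding Qlhs_def GC' using finGC fnot eqf by simp
  have rhs': "Qrhs N s R ff ?C' = s f * (\<Sum>g<f. ?n g) + Qrhs N s R ff C"
    unfolding Qrhs_def GC' using finGC fnot by simp
  have Xge: "(\<Sum>g\<in>{f<..<N} - C. ?n g) \<le> X"
  proof -
    have "(\<Sum>g\<in>{f<..<N} - C. ?n g) = (\<Sum>g\<in>{g\<in>{f<..<N} - C. ?n g \<noteq> 0}. ?n g)"
      by (rule sum.mono_neutral_right) auto
    also have "\<dots> \<le> X" unfolding X_def
      by (rule sum_mono2) (use fin in \<open>auto simp: GS_files_def\<close>)
    finally show ?thesis .
  qed
  have "Qlhs N s R ff ?C' + s f * X < Qrhs N s R ff ?C' + s f * X"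
  proof -
    have "Qlhs N s R ff ?C' + s f * X = ?n f * (lft s f + (\<Sum>g\<in>{g\<in>C. g < f}. s g)) + Qlhs N s R ff C"
      using lhs' old by simp
    also have "\<dots> \<le> ?n f * (lft s f + (\<Sum>g\<in>{g\<in>C. g < f}. s g)) + Qrhs N s R ff C"
      using inv unfolding Qinv_def by simp
    also have "\<dots> < s f * ((\<Sum>g<f. ?n g) + (\<Sum>g\<in>{f<..<N} - C. ?n g)) + Qrhs N s R ff C"
      using cond by simp
    also have "\<dots> \<le> s f * ((\<Sum>g<f. ?n g) + X) + Qrhs N s R ff C"
      using Xge by (simp add: mult_le_mono2)
    also have "\<dots> = Qrhs N s R ff ?C' + s f * X" using rhs' by (simp add: algebra_simps)
    finally show ?thesis .
  qed
  then have "Qlhs N s R ff ?C' \<le> Qrhs N s R ff ?C'" by simp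
  moreover have "?C' \<subseteq> ?G" using CG by auto
  ultimately show ?thesis unfolding Qinv_def res by simp
qed

lemma Qinv_fold:
  assumes "Qinv N s R ff C" and nz: "\<And>h. N \<le> h \<Longrightarrow> nreq R ff h = 0"
  shows "Qinv N s R ff (fold (fgs_check N s R ff) xs C)"
  using assms(1)
proof (induction xs arbitrary: C)
  case Nil then show ?case by simp
next
  case (Cons x xs)
  then show ?case using Qinv_check[OF Cons.prems nz] by simp
qed

lemma Qinv_FGS:
  assumes nz: "\<And>h. N \<le> h \<Longrightarrow> nreq R ff h = 0"
  shows "Qinv N s R ff ((fgs_round N s R ff ^^ k) (GS_files N R ff))"
proof (induction k)
  case 0 then show ?case using Qinv_GS by simp
next
  case (Suc k)
  then show ?case unfolding funpow.simps comp_def fgs_round_def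
    using Qinv_fold[OF _ nz] by blast
qed

lemma lft_inj:
  assumes "i < N" "j < N" "lft s i = lft s j" "\<forall>k<N. 0 < s k"
  shows "i = j"
proof (rule ccontr)
  assume "i \<noteq> j"
  then consider "i < j" | "j < i" by linarith
  then show False
  proof cases
    case 1 then show ?thesis using lft_less[OF 1 assms(4) assms(2)] assms(3) by simp
  next
    case 2 then show ?thesis using lft_less[OF 2 assms(4) assms(1)] assms(3) by simp
  qed
qed

lemma lft_le_m: "i < N \<Longrightarrow> \<forall>k<N. 0 < s k \<Longrightarrow> lft s i \<le> tape_len N s"
  using lft_le_tape[of i N s] by fastforce

lemma rgt_eq: "0 < s i \<Longrightarrow> rgt s i = lft s i + (s i - 1)"
  unfolding rgt_def by simp

lemma setB: "{snd b |b. b \<in> (\<lambda>f. (f, f)) ` S \<and> int (lft s (fst b)) = x} = {g\<in>S. int (lft s g) = x}"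
  by force

lemma len_exc: "x \<le> y \<Longrightarrow> length (excursion x y) = 2 * nat (y - x)"
  unfolding excursion_def by simp

lemma ph_a:
  assumes pos: "\<forall>k<N. 0 < s k" and SN: "\<forall>g\<in>S. g < N" and g: "g \<in> S"
  shows "phase1_at s ((\<lambda>f. (f, f)) ` S) (int (lft s g)) = int (lft s g) # excursion (int (lft s g)) (int (rgt s g))"
proof -
  have "{g'\<in>S. int (lft s g') = int (lft s g)} = {g}"
    using lft_inj[of _ N g s] pos SN g by auto
  then show ?thesis unfolding phase1_at_def setB by simp
qed

lemma ph_b:
  assumes "\<forall>g\<in>S. int (lft s g) \<noteq> x"
  shows "phase1_at s ((\<lambda>f. (f, f)) ` S) x = [x]"
proof -
  have e: "{g'\<in>S. int (lft s g') = x} = {}" using assms by auto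
  show ?thesis unfolding phase1_at_def setB e by simp
qed

lemma len_ph:
  assumes pos: "\<forall>k<N. 0 < s k" and SN: "\<forall>g\<in>S. g < N" and fin: "finite S"
  shows "length (phase1_at s ((\<lambda>f. (f, f)) ` S) x) = 1 + (\<Sum>g\<in>S. if int (lft s g) = x then 2 * (s g - 1) else 0)"
proof (cases "\<exists>g\<in>S. int (lft s g) = x")
  case True
  then obtain g where g: "g \<in> S" "int (lft s g) = x" by blast
  have sg: "0 < s g" using pos SN g by blast
  have "(\<Sum>g'\<in>S. if int (lft s g') = x then 2 * (s g' - 1) else 0)
        = (\<Sum>g'\<in>S. if g' = g then 2 * (s g - 1) else 0)"
  proof (rule sum.cong)
    fix g' assume g': "g' \<in> S"
    have "int (lft s g') = x \<longleftrightarrow> g' = g"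
      using lft_inj[of g' N g s] pos SN g g' by auto
    then show "(if int (lft s g') = x then 2 * (s g' - 1) else 0) = (if g' = g then 2 * (s g - 1) else 0)"
      by auto
  qed simp
  also have "\<dots> = 2 * (s g - 1)" using g fin by simp
  finally have e: "(\<Sum>g'\<in>S. if int (lft s g') = x then 2 * (s g' - 1) else 0) = 2 * (s g - 1)" .
  have "length (phase1_at s ((\<lambda>f. (f, f)) ` S) x) = 1 + 2 * (s g - 1)"
    using ph_a[OF pos SN g(1)] g(2) len_exc rgt_eq[of s g, OF sg] by auto
  then show ?thesis using e by simp
next
  case False
  then have "(\<Sum>g\<in>S. if int (lft s g) = x then 2 * (s g - 1) else 0) = 0" by (intro sum.neutral) auto
  then show ?thesis using ph_b[of S s x] False by auto
qed

lemma nth_ph: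
  assumes pos: "\<forall>k<N. 0 < s k" and SN: "\<forall>g\<in>S. g < N" and g: "g \<in> S" and k: "k < s g"
  shows "phase1_at s ((\<lambda>f. (f, f)) ` S) (int (lft s g)) ! k = int (lft s g) + int k"
proof (cases k)
  case 0 then show ?thesis using ph_a[OF pos SN g] by simp
next
  case (Suc k')
  have sg: "0 < s g" using pos SN g by blast
  have len: "length [int (lft s g) + 1..int (rgt s g)] = s g - 1" using rgt_eq[of s g, OF sg] by simp
  have "k' < s g - 1" using k Suc by simp
  then have "excursion (int (lft s g)) (int (rgt s g)) ! k' = [int (lft s g) + 1..int (rgt s g)] ! k'"
    unfolding excursion_def using len by (simp add: nth_append)
  also have "\<dots> = int (lft s g) + 1 + int k'"
    using \<open>k' < s g - 1\<close> rgt_eq[of s g, OF sg] by (subst nth_upto) auto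
  finally show ?thesis using ph_a[OF pos SN g] Suc by simp
qed

lemma concat_nth_prefix:
  "i < length xss \<Longrightarrow> j < length (xss!i) \<Longrightarrow>
   concat xss ! (sum_list (map length (take i xss)) + j) = xss ! i ! j"
proof (induction xss arbitrary: i)
  case Nil then show ?case by simp
next
  case (Cons xs xss)
  show ?case
  proof (cases i)
    case 0 then show ?thesis using Cons.prems by (simp add: nth_append)
  next
    case (Suc i')
    then show ?thesis using Cons by (simp add: nth_append add.assoc)
  qed
qed

lemma sum_list_take: "i \<le> length xs \<Longrightarrow> sum_list (map f (take i xs)) = (\<Sum>j<i. f (xs!j))"
proof (induction i)
  case 0 then show ?case by simp
next
  case (Suc i)
  then have "take (Suc i) xs = take i xs @ [xs!i]" by (simp add: take_Suc_conv_app_nth)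
  then show ?case using Suc by simp
qed

lemma rev_upto_nth: "j < m \<Longrightarrow> rev [1..int m] ! j = int m - int j"
  by (simp add: rev_nth nth_upto)

lemma blocks_nth:
  "j < m \<Longrightarrow> map (phase1_at s B) (rev [1..int m]) ! j = phase1_at s B (int m - int j)"
  by (simp add: rev_upto_nth)

lemma Pre_closed:
  assumes pos: "\<forall>k<N. 0 < s k" and SN: "\<forall>g\<in>S. g < N" and fin: "finite S"
    and x: "x \<le> tape_len N s"
  shows "sum_list (map length (take (tape_len N s - x)
            (map (phase1_at s ((\<lambda>f. (f, f)) ` S)) (rev [1..int (tape_len N s)]))))
         = (tape_len N s - x) + (\<Sum>g\<in>S. if x < lft s g then 2 * (s g - 1) else 0)"
proof -
  let ?m = "tape_len N s"
  let ?B = "(\<lambda>f. (f, f)) ` S"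
  let ?bl = "map (phase1_at s ?B) (rev [1..int ?m])"
  have lenbl: "length ?bl = ?m" by simp
  have "sum_list (map length (take (?m - x) ?bl)) = (\<Sum>j<?m - x. length (?bl ! j))"
    by (rule sum_list_take) (simp)
  also have "\<dots> = (\<Sum>j<?m - x. 1 + (\<Sum>g\<in>S. if int (lft s g) = int ?m - int j then 2 * (s g - 1) else 0))"
  proof (rule sum.cong)
    fix j assume "j \<in> {..<?m - x}"
    then have "j < ?m" by simp
    then show "length (?bl ! j) = 1 + (\<Sum>g\<in>S. if int (lft s g) = int ?m - int j then 2 * (s g - 1) else 0)"
      using blocks_nth[of j ?m s ?B] len_ph[OF pos SN fin] by simp
  qed simp
  also have "\<dots> = (?m - x) + (\<Sum>j<?m - x. \<Sum>g\<in>S. if int (lft s g) = int ?m - int j then 2 * (s g - 1) else 0)"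
    by (simp only: sum.distrib) simp
  also have "(\<Sum>j<?m - x. \<Sum>g\<in>S. if int (lft s g) = int ?m - int j then 2 * (s g - 1) else 0)
      = (\<Sum>g\<in>S. \<Sum>j<?m - x. if int (lft s g) = int ?m - int j then 2 * (s g - 1) else 0)"
    by (rule sum.swap)
  also have "\<dots> = (\<Sum>g\<in>S. if x < lft s g then 2 * (s g - 1) else 0)"
  proof (rule sum.cong)
    fix g assume g: "g \<in> S"
    have lm: "lft s g \<le> ?m" using lft_le_m[of g N s] SN g pos by blast
    have l1: "1 \<le> lft s g" by (rule lft_ge1)
    have "(\<Sum>j<?m - x. if int (lft s g) = int ?m - int j then 2 * (s g - 1) else 0)
        = (\<Sum>j<?m - x. if j = ?m - lft s g then 2 * (s g - 1) else 0)"
    proof (rule sum.cong)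
      fix j assume "j \<in> {..<?m - x}"
      then have "j < ?m" by simp
      then have "int (lft s g) = int ?m - int j \<longleftrightarrow> j = ?m - lft s g" using lm by auto
      then show "(if int (lft s g) = int ?m - int j then 2 * (s g - 1) else 0)
          = (if j = ?m - lft s g then 2 * (s g - 1) else 0)" by simp
    qed simp
    also have "\<dots> = (if ?m - lft s g \<in> {..<?m - x} then 2 * (s g - 1) else 0)"
      by (rule sum.delta) simp
    also have "\<dots> = (if x < lft s g then 2 * (s g - 1) else 0)"
      using lm l1 x by auto
    finally show "(\<Sum>j<?m - x. if int (lft s g) = int ?m - int j then 2 * (s g - 1) else 0)
        = (if x < lft s g then 2 * (s g - 1) else 0)" .
  qed simp
  finally show ?thesis .
qed

lemma concat_idx_lt:
  "i < length xss \<Longrightarrow> j < length (xss!i) \<Longrightarrow>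
   sum_list (map length (take i xss)) + j < length (concat xss)"
proof (induction xss arbitrary: i)
  case Nil then show ?case by simp
next
  case (Cons xs xss)
  show ?case
  proof (cases i)
    case 0 then show ?thesis using Cons.prems by simp
  next
    case (Suc i')
    then show ?thesis using Cons by simp
  qed
qed

lemma sched_read_S:
  assumes pos: "\<forall>k<N. 0 < s k" and SN: "\<forall>g\<in>S. g < N" and fin: "finite S" and g: "g \<in> S"
  shows "reads_at s (sched_mv N s ((\<lambda>f. (f, f)) ` S)) g
           (tape_len N s - lft s g + (\<Sum>g'\<in>S. if lft s g < lft s g' then 2 * (s g' - 1) else 0))"
  unfolding reads_at_def
proof (intro allI impI)
  fix k assume k: "k < s g"
  let ?m = "tape_len N s"
  let ?B = "(\<lambda>f. (f, f)) ` S"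
  let ?bl = "map (phase1_at s ?B) (rev [1..int ?m])"
  let ?i = "?m - lft s g"
  have lm: "lft s g \<le> ?m" using lft_le_m[of g N s] SN g pos by blast
  have l1: "1 \<le> lft s g" by (rule lft_ge1)
  have im: "?i < length ?bl" using lm l1 by simp
  have bi: "?bl ! ?i = phase1_at s ?B (int (lft s g))"
    using blocks_nth[of ?i ?m s ?B] lm l1 by simp
  have sg: "0 < s g" using pos SN g by blast
  have lenb: "length (?bl ! ?i) = 1 + 2 * (s g - 1)"
    using bi ph_a[OF pos SN g] len_exc rgt_eq[of s g, OF sg] by auto
  have kl: "k < length (?bl ! ?i)" using lenb k by simp
  have pre: "sum_list (map length (take ?i ?bl))
      = ?i + (\<Sum>g'\<in>S. if lft s g < lft s g' then 2 * (s g' - 1) else 0)"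
    by (rule Pre_closed[OF pos SN fin lm])
  define T where "T = ?i + (\<Sum>g'\<in>S. if lft s g < lft s g' then 2 * (s g' - 1) else 0)"
  have idx: "T + k < length (concat ?bl)"
    using concat_idx_lt[OF im kl] pre unfolding T_def by simp
  have val: "concat ?bl ! (T + k) = int (lft s g) + int k"
    using concat_nth_prefix[OF im kl] pre bi nth_ph[OF pos SN g k] unfolding T_def by simp
  have "sched_path N s ?B ! (T + k) = int (lft s g) + int k"
    unfolding sched_path_def using idx val by (simp add: nth_append)
  moreover have "T + k < length (sched_path N s ?B)"
    unfolding sched_path_def using idx by simp
  ultimately show "sched_mv N s ?B (?m - lft s g + (\<Sum>g'\<in>S. if lft s g < lft s g' then 2 * (s g' - 1) else 0) + k)
      = int (lft s g + k)"
    unfolding sched_mv_def T_def by simp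
qed

lemma lft_ge2: "0 < g \<Longrightarrow> g < N \<Longrightarrow> \<forall>k<N. 0 < s k \<Longrightarrow> 2 \<le> lft s g"
  using lft_mono_strict[of 0 g N s] unfolding lft_def by fastforce

lemma sched_late:
  assumes pos: "\<forall>k<N. 0 < s k" and SN: "\<forall>g\<in>S. 0 < g \<and> g < N" and fin: "finite S" and N0: "0 < N"
    and P1: "P1 = tape_len N s + (\<Sum>g\<in>S. 2 * (s g - 1))" and t: "P1 \<le> t + 1"
  shows "sched_mv N s ((\<lambda>f. (f, f)) ` S) t = min (int t - int P1 + 2) (int (tape_len N s))"
proof -
  let ?m = "tape_len N s"
  let ?B = "(\<lambda>f. (f, f)) ` S"
  let ?bl = "map (phase1_at s ?B) (rev [1..int ?m])"
  have SN': "\<forall>g\<in>S. g < N" using SN by blast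
  have m1: "1 \<le> ?m" using lft_le_tape[OF N0, of s] pos N0 unfolding lft_def by auto
  have lenc: "length (concat ?bl) = P1"
  proof -
    have "length (concat ?bl) = sum_list (map length (take (?m - 0) ?bl))" by (simp add: length_concat)
    also have "\<dots> = ?m + (\<Sum>g\<in>S. if 0 < lft s g then 2 * (s g - 1) else 0)"
      using Pre_closed[OF pos SN' fin, of 0] by simp
    also have "\<dots> = P1" unfolding P1 using lft_ge1[of s] by (simp add: Suc_le_eq)
    finally show ?thesis .
  qed
  have lensp: "length (sched_path N s ?B) = P1 + (?m - 1)"
    unfolding sched_path_def using lenc by simp
  show ?thesis
  proof (cases "t < P1")
    case True
    then have tP: "t = P1 - 1" using t by simp
    have pre: "sum_list (map length (take (?m - 1) ?bl)) = P1 - 1"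
    proof -
      have "sum_list (map length (take (?m - 1) ?bl)) = (?m - 1) + (\<Sum>g\<in>S. if 1 < lft s g then 2 * (s g - 1) else 0)"
        using Pre_closed[OF pos SN' fin, of 1] m1 by simp
      also have "(\<Sum>g\<in>S. if 1 < lft s g then 2 * (s g - 1) else 0) = (\<Sum>g\<in>S. 2 * (s g - 1))"
      proof (rule sum.cong)
        fix g assume "g \<in> S"
        then have "2 \<le> lft s g" using lft_ge2[of g N s] SN pos by blast
        then show "(if 1 < lft s g then 2 * (s g - 1) else 0) = 2 * (s g - 1)" by simp
      qed simp
      finally show ?thesis unfolding P1 using m1 by simp
    qed
    have im: "?m - 1 < length ?bl" using m1 by simp
    have bi: "?bl ! (?m - 1) = [1]"
    proof -
      have "?bl ! (?m - 1) = phase1_at s ?B 1" using blocks_nth[of "?m - 1" ?m s ?B] m1 by simp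
      also have "\<dots> = [1]"
      proof (rule ph_b, intro ballI)
        fix g assume "g \<in> S"
        then have "2 \<le> lft s g" using lft_ge2[of g N s] SN pos by blast
        then show "int (lft s g) \<noteq> 1" by simp
      qed
      finally show ?thesis .
    qed
    have "concat ?bl ! (sum_list (map length (take (?m - 1) ?bl)) + 0) = 1"
      using concat_nth_prefix[OF im, of 0] bi by simp
    then have "concat ?bl ! t = 1" using pre tP by simp
    then have "sched_path N s ?B ! t = 1" unfolding sched_path_def using True lenc by (simp add: nth_append)
    then have "sched_mv N s ?B t = 1" unfolding sched_mv_def using True lensp by simp
    then show ?thesis using tP m1 True by simp
  next
    case False
    show ?thesis
    proof (cases "t < P1 + (?m - 1)")
      case True
      have "sched_path N s ?B ! t = [2..int ?m] ! (t - P1)"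
        unfolding sched_path_def using False lenc by (simp add: nth_append)
      also have "\<dots> = 2 + int (t - P1)" using True False by (subst nth_upto) auto
      finally have "sched_mv N s ?B t = 2 + int (t - P1)" unfolding sched_mv_def using True lensp by simp
      then show ?thesis using True False by simp
    next
      case F2: False
      then have "sched_mv N s ?B t = int ?m" unfolding sched_mv_def using lensp by simp
      then show ?thesis using F2 by simp
    qed
  qed
qed

lemma sched_read_late:
  assumes pos: "\<forall>k<N. 0 < s k" and SN: "\<forall>g\<in>S. 0 < g \<and> g < N" and fin: "finite S"
    and h: "h < N"
  shows "reads_at s (sched_mv N s ((\<lambda>f. (f, f)) ` S)) h
           (tape_len N s + (\<Sum>g\<in>S. 2 * (s g - 1)) + lft s h - 2)"
  unfolding reads_at_def
proof (intro allI impI)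
  fix k assume k: "k < s h"
  define P1 where "P1 = tape_len N s + (\<Sum>g\<in>S. 2 * (s g - 1))"
  have N0: "0 < N" using h by simp
  have m1: "1 \<le> tape_len N s" using lft_le_tape[OF N0, of s] pos N0 unfolding lft_def by auto
  have l1: "1 \<le> lft s h" by (rule lft_ge1)
  have a: "lft s h + s h \<le> 1 + tape_len N s" by (rule lft_le_tape[OF h])
  have "P1 \<le> (P1 + lft s h - 2 + k) + 1" using l1 by simp
  then have "sched_mv N s ((\<lambda>f. (f, f)) ` S) (P1 + lft s h - 2 + k)
        = min (int (P1 + lft s h - 2 + k) - int P1 + 2) (int (tape_len N s))"
    by (rule sched_late[OF pos SN fin N0 P1_def])
  also have "\<dots> = int (lft s h + k)"
  proof -
    have P1ge: "1 \<le> P1" unfolding P1_def using m1 by simp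
    have e: "int (P1 + lft s h - 2 + k) = int P1 + int (lft s h) + int k - 2"
      using P1ge l1 by (simp add: of_nat_diff)
    show ?thesis unfolding e using l1 a k m1 by simp
  qed
  finally show "sched_mv N s ((\<lambda>f. (f, f)) ` S) (tape_len N s + (\<Sum>g\<in>S. 2 * (s g - 1)) + lft s h - 2 + k)
      = int (lft s h + k)" unfolding P1_def .
qed

lemma tail_sum_bound:
  assumes pos: "\<forall>k<N. 0 < s k" and h: "h < N"
  shows "(\<Sum>u\<in>{u\<in>{..<N}. h < u}. s u) \<le> tape_len N s - lft s h"
proof -
  have split: "{..<N} = {..<Suc h} \<union> {u\<in>{..<N}. h < u}" using h by auto
  have "tape_len N s = (\<Sum>u\<in>{..<Suc h} \<union> {u\<in>{..<N}. h < u}. s u)"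
    unfolding tape_len_def by (subst split) (rule refl)
  also have "\<dots> = (\<Sum>u<Suc h. s u) + (\<Sum>u\<in>{u\<in>{..<N}. h < u}. s u)"
    by (rule sum.union_disjoint) auto
  finally have "tape_len N s = (\<Sum>u<h. s u) + s h + (\<Sum>u\<in>{u\<in>{..<N}. h < u}. s u)" by simp
  moreover have "0 < s h" using pos h by simp
  ultimately show ?thesis unfolding lft_def by simp
qed

lemma core_bound:
  fixes n s :: "nat \<Rightarrow> nat"
  assumes pos: "\<forall>k<N. 0 < s k"
    and Gd: "G = {f. 0 < f \<and> f < N \<and> 0 < n f}"
    and SG: "S \<subseteq> G"
    and Q: "(\<Sum>u\<in>G - S. n u * (lft s u + (\<Sum>g\<in>{g\<in>S. g < u}. s g)))
            \<le> (\<Sum>u\<in>G - S. s u * (\<Sum>g<u. n g))"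
  shows "(\<Sum>h<N. n h * ((\<Sum>g\<in>{g\<in>S. h < g}. s g - 1)
            + (if h \<in> S then 0 else lft s h - 1 + (\<Sum>g\<in>{g\<in>S. g < h}. s g - 1))))
         \<le> (\<Sum>h<N. n h * (tape_len N s - lft s h))"
proof -
  have finG: "finite G" unfolding Gd by (rule finite_subset[of _ "{..<N}"]) auto
  have finS: "finite S" using SG finG finite_subset by blast
  have SN: "\<forall>g\<in>S. g < N" using SG Gd by auto
  define P1 where "P1 = (\<Sum>h<N. n h * (\<Sum>g\<in>{g\<in>S. h < g}. s g - 1))"
  define F where "F h = n h * (if h \<in> S then 0 else lft s h - 1 + (\<Sum>g\<in>{g\<in>S. g < h}. s g - 1))" for h
  have A: "(\<Sum>h<N. n h * ((\<Sum>g\<in>{g\<in>S. h < g}. s g - 1)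
            + (if h \<in> S then 0 else lft s h - 1 + (\<Sum>g\<in>{g\<in>S. g < h}. s g - 1))))
         = P1 + (\<Sum>h<N. F h)"
    unfolding P1_def F_def by (simp add: sum.distrib algebra_simps)
  have B: "P1 \<le> (\<Sum>g\<in>S. s g * (\<Sum>h<g. n h))"
  proof -
    have "P1 = (\<Sum>h<N. \<Sum>g\<in>S. if h < g then n h * (s g - 1) else 0)"
      unfolding P1_def
    proof (rule sum.cong)
      fix h assume "h \<in> {..<N}"
      have "n h * (\<Sum>g\<in>{g\<in>S. h < g}. s g - 1) = (\<Sum>g\<in>{g\<in>S. h < g}. n h * (s g - 1))"
        by (simp add: sum_distrib_left)
      also have "\<dots> = (\<Sum>g\<in>S. if h < g then n h * (s g - 1) else 0)"
        by (rule sum.inter_filter[OF finS])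
      finally show "n h * (\<Sum>g\<in>{g\<in>S. h < g}. s g - 1) = (\<Sum>g\<in>S. if h < g then n h * (s g - 1) else 0)" .
    qed simp
    also have "\<dots> = (\<Sum>g\<in>S. \<Sum>h<N. if h < g then n h * (s g - 1) else 0)"
      by (rule sum.swap)
    also have "\<dots> = (\<Sum>g\<in>S. (s g - 1) * (\<Sum>h<g. n h))"
    proof (rule sum.cong)
      fix g assume g: "g \<in> S"
      have "(\<Sum>h<N. if h < g then n h * (s g - 1) else 0) = (\<Sum>h\<in>{h\<in>{..<N}. h < g}. n h * (s g - 1))"
        by (rule sum.inter_filter[symmetric]) simp
      also have "\<dots> = (\<Sum>h<g. n h * (s g - 1))"
        using SN g by (intro sum.cong) auto
      also have "\<dots> = (s g - 1) * (\<Sum>h<g. n h)"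
        by (simp add: sum_distrib_right mult.commute)
      finally show "(\<Sum>h<N. if h < g then n h * (s g - 1) else 0) = (s g - 1) * (\<Sum>h<g. n h)" .
    qed simp
    also have "\<dots> \<le> (\<Sum>g\<in>S. s g * (\<Sum>h<g. n h))"
      by (rule sum_mono) (simp add: mult_le_mono1)
    finally show ?thesis .
  qed
  have C: "(\<Sum>h<N. F h) \<le> (\<Sum>u\<in>G - S. n u * (lft s u + (\<Sum>g\<in>{g\<in>S. g < u}. s g)))"
  proof -
    have "(\<Sum>h<N. F h) = (\<Sum>h\<in>G - S. F h)"
    proof (rule sum.mono_neutral_right)
      show "G - S \<subseteq> {..<N}" using Gd by auto
      show "\<forall>h\<in>{..<N} - (G - S). F h = 0"
      proof
        fix h assume h: "h \<in> {..<N} - (G - S)"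
        show "F h = 0"
        proof (cases "h \<in> S")
          case True then show ?thesis unfolding F_def by simp
        next
          case False
          then have "h = 0 \<or> n h = 0" using h Gd by auto
          then show ?thesis
          proof
            assume h0: "h = 0"
            have "{g\<in>S. g < h} = {}" using h0 by auto
            then show ?thesis unfolding F_def using h0 by (simp add: lft_def)
          next
            assume "n h = 0" then show ?thesis unfolding F_def by simp
          qed
        qed
      qed
    qed simp
    also have "\<dots> \<le> (\<Sum>u\<in>G - S. n u * (lft s u + (\<Sum>g\<in>{g\<in>S. g < u}. s g)))"
    proof (rule sum_mono)
      fix u assume u: "u \<in> G - S"
      have "(\<Sum>g\<in>{g\<in>S. g < u}. s g - 1) \<le> (\<Sum>g\<in>{g\<in>S. g < u}. s g)" by (rule sum_mono) simp
      then have "lft s u - 1 + (\<Sum>g\<in>{g\<in>S. g < u}. s g - 1) \<le> lft s u + (\<Sum>g\<in>{g\<in>S. g < u}. s g)" by simp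
      then show "F u \<le> n u * (lft s u + (\<Sum>g\<in>{g\<in>S. g < u}. s g))"
        unfolding F_def using u by (simp add: mult_le_mono2)
    qed
    finally show ?thesis .
  qed
  have D: "(\<Sum>g\<in>S. s g * (\<Sum>h<g. n h)) + (\<Sum>u\<in>G - S. s u * (\<Sum>g<u. n g)) \<le> (\<Sum>u<N. s u * (\<Sum>h<u. n h))"
  proof -
    have "(\<Sum>g\<in>S. s g * (\<Sum>h<g. n h)) + (\<Sum>u\<in>G - S. s u * (\<Sum>g<u. n g)) = (\<Sum>u\<in>G. s u * (\<Sum>h<u. n h))"
      using sum.subset_diff[OF SG finG, of "\<lambda>u. s u * (\<Sum>h<u. n h)"] by simp
    also have "\<dots> \<le> (\<Sum>u<N. s u * (\<Sum>h<u. n h))"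
      by (rule sum_mono2) (use Gd in auto)
    finally show ?thesis .
  qed
  have E: "(\<Sum>u<N. s u * (\<Sum>h<u. n h)) \<le> (\<Sum>h<N. n h * (tape_len N s - lft s h))"
  proof -
    have "(\<Sum>u<N. s u * (\<Sum>h<u. n h)) = (\<Sum>u<N. \<Sum>h<N. if h < u then n h * s u else 0)"
    proof (rule sum.cong)
      fix u assume u: "u \<in> {..<N}"
      have "(\<Sum>h<N. if h < u then n h * s u else 0) = (\<Sum>h\<in>{h\<in>{..<N}. h < u}. n h * s u)"
        by (rule sum.inter_filter[symmetric]) simp
      also have "\<dots> = (\<Sum>h<u. n h * s u)"
        using u by (intro sum.cong) auto
      also have "\<dots> = s u * (\<Sum>h<u. n h)"
        by (simp add: sum_distrib_left mult.commute)
      finally show "s u * (\<Sum>h<u. n h) = (\<Sum>h<N. if h < u then n h * s u else 0)" by simp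
    qed simp
    also have "\<dots> = (\<Sum>h<N. \<Sum>u<N. if h < u then n h * s u else 0)" by (rule sum.swap)
    also have "\<dots> = (\<Sum>h<N. n h * (\<Sum>u\<in>{u\<in>{..<N}. h < u}. s u))"
    proof (rule sum.cong)
      fix h assume "h \<in> {..<N}"
      have "(\<Sum>u<N. if h < u then n h * s u else 0) = (\<Sum>u\<in>{u\<in>{..<N}. h < u}. n h * s u)"
        by (rule sum.inter_filter[symmetric]) simp
      then show "(\<Sum>u<N. if h < u then n h * s u else 0) = n h * (\<Sum>u\<in>{u\<in>{..<N}. h < u}. s u)"
        by (simp add: sum_distrib_left)
    qed simp
    also have "\<dots> \<le> (\<Sum>h<N. n h * (tape_len N s - lft s h))"
      by (rule sum_mono) (use tail_sum_bound[OF pos] in \<open>simp add: mult_le_mono2\<close>)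
    finally show ?thesis .
  qed
  show ?thesis using A B C D E Q by linarith
qed

lemma sum_by_file:
  assumes "finite R" "\<forall>q\<in>R. ff q < N"
  shows "(\<Sum>q\<in>R. f (ff q)) = (\<Sum>h<N. nreq R ff h * f h)"
proof -
  have "(\<Sum>q\<in>R. f (ff q)) = (\<Sum>q\<in>R. \<Sum>h<N. if ff q = h then f h else 0)"
    by (rule sum.cong) (use assms in \<open>simp_all add: sum.delta\<close>)
  also have "\<dots> = (\<Sum>h<N. \<Sum>q\<in>R. if ff q = h then f h else 0)" by (rule sum.swap)
  also have "\<dots> = (\<Sum>h<N. nreq R ff h * f h)"
  proof (rule sum.cong)
    fix h assume "h \<in> {..<N}"
    have "(\<Sum>q\<in>R. if ff q = h then f h else 0) = (\<Sum>q\<in>{q\<in>R. ff q = h}. f h)"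
      by (rule sum.inter_filter[symmetric]) (use assms in simp)
    then show "(\<Sum>q\<in>R. if ff q = h then f h else 0) = nreq R ff h * f h"
      unfolding nreq_def by simp
  qed simp
  finally show ?thesis .
qed

lemma tau_eq:
  assumes pos: "\<forall>k<N. 0 < s k" and SN: "\<forall>g\<in>S. g < N" and fin: "finite S" and h: "h < N"
  shows "(if h \<in> S then tape_len N s - lft s h + (\<Sum>g'\<in>S. if lft s h < lft s g' then 2 * (s g' - 1) else 0)
          else tape_len N s + (\<Sum>g\<in>S. 2 * (s g - 1)) + lft s h - 2)
       = (tape_len N s - lft s h) + 2 * ((\<Sum>g\<in>{g\<in>S. h < g}. s g - 1)
            + (if h \<in> S then 0 else lft s h - 1 + (\<Sum>g\<in>{g\<in>S. g < h}. s g - 1)))"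
proof -
  have lm: "lft s h \<le> tape_len N s" using lft_le_m[OF h pos] .
  have l1: "1 \<le> lft s h" by (rule lft_ge1)
  have X: "(\<Sum>g'\<in>S. if lft s h < lft s g' then 2 * (s g' - 1) else 0) = 2 * (\<Sum>g\<in>{g\<in>S. h < g}. s g - 1)"
  proof -
    have "(\<Sum>g'\<in>S. if lft s h < lft s g' then 2 * (s g' - 1) else 0) = (\<Sum>g'\<in>S. if h < g' then 2 * (s g' - 1) else 0)"
    proof (rule sum.cong)
      fix g' assume g': "g' \<in> S"
      then have g'N: "g' < N" using SN by blast
      have "lft s h < lft s g' \<longleftrightarrow> h < g'"
      proof
        assume "lft s h < lft s g'"
        show "h < g'"
        proof (rule ccontr)
          assume "\<not> h < g'"
          then have "g' = h \<or> g' < h" by auto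
          then show False using lft_less[of g' h N s] pos h \<open>lft s h < lft s g'\<close> by auto
        qed
      next
        assume "h < g'" then show "lft s h < lft s g'" using lft_less[of h g' N s] pos g'N by blast
      qed
      then show "(if lft s h < lft s g' then 2 * (s g' - 1) else 0) = (if h < g' then 2 * (s g' - 1) else 0)" by simp
    qed simp
    also have "\<dots> = (\<Sum>g\<in>{g\<in>S. h < g}. 2 * (s g - 1))"
      by (rule sum.inter_filter[symmetric, OF fin])
    also have "\<dots> = 2 * (\<Sum>g\<in>{g\<in>S. h < g}. s g - 1)" by (simp add: sum_distrib_left)
    finally show ?thesis .
  qed
  show ?thesis
  proof (cases "h \<in> S")
    case True then show ?thesis using X by simp
  next
    case False
    have "S = {g\<in>S. h < g} \<union> {g\<in>S. g < h}"
    proof (intro equalityI subsetI)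
      fix x assume "x \<in> S"
      then have "x \<noteq> h" using False by blast
      then have "h < x \<or> x < h" by (rule nat_neq_iff[THEN iffD1, OF not_sym])
      then show "x \<in> {g\<in>S. h < g} \<union> {g\<in>S. g < h}" using \<open>x \<in> S\<close> by blast
    next
      fix x assume "x \<in> {g\<in>S. h < g} \<union> {g\<in>S. g < h}"
      then show "x \<in> S" by blast
    qed
    then have "(\<Sum>g\<in>S. s g - 1) = (\<Sum>g\<in>{g\<in>S. h < g} \<union> {g\<in>S. g < h}. s g - 1)" by simp
    also have "\<dots> = (\<Sum>g\<in>{g\<in>S. h < g}. s g - 1) + (\<Sum>g\<in>{g\<in>S. g < h}. s g - 1)"
      by (rule sum.union_disjoint) (use fin in auto)
    finally have Y: "(\<Sum>g\<in>S. 2 * (s g - 1)) = 2 * ((\<Sum>g\<in>{g\<in>S. h < g}. s g - 1) + (\<Sum>g\<in>{g\<in>S. g < h}. s g - 1))"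
      by (simp add: sum_distrib_left[symmetric])
    show ?thesis using False Y lm l1 by simp
  qed
qed

theorem proposition7:
  fixes N :: nat and s :: "nat \<Rightarrow> nat" and R :: "'r set" and ff :: "'r \<Rightarrow> nat"
  assumes "\<forall>i<N. 0 < s i"
    and "finite R"
    and "\<forall>q\<in>R. ff q < N"
  shows "v N s R ff (FGS N s R ff) \<le> 3 * OPT N s R ff"
proof (cases "R = {}")
  case True
  then show ?thesis unfolding v_def total_resp_def by simp
next
  case False
  note pos = assms(1) and finR = assms(2) and Rl = assms(3)
  obtain q0 where "q0 \<in> R" using False by blast
  then have N0: "0 < N" using Rl by fastforce
  have nz: "nreq R ff h = 0" if "N \<le> h" for h
  proof -
    have e: "{q\<in>R. ff q = h} = {}" using Rl that by fastforce
    show ?thesis unfolding nreq_def e by simp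
  qed
  define S where "S = (fgs_round N s R ff ^^ N) (GS_files N R ff)"
  define B where "B = (\<lambda>f. (f, f)) ` S"
  let ?m = "tape_len N s"
  let ?n = "nreq R ff"
  have FG: "FGS N s R ff = B" unfolding FGS_def B_def S_def by simp
  have inv: "Qinv N s R ff S" unfolding S_def by (rule Qinv_FGS) (rule nz)
  have SG: "S \<subseteq> GS_files N R ff" using inv unfolding Qinv_def by simp
  have SN: "\<forall>g\<in>S. 0 < g \<and> g < N" using SG unfolding GS_files_def by auto
  have SN': "\<forall>g\<in>S. g < N" using SN by blast
  have finS: "finite S" using SG finite_GS finite_subset by blast
  define tau where "tau h = (if h \<in> S then ?m - lft s h + (\<Sum>g'\<in>S. if lft s h < lft s g' then 2 * (s g' - 1) else 0)
          else ?m + (\<Sum>g\<in>S. 2 * (s g - 1)) + lft s h - 2)" for h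
  define rho where "rho h = ((\<Sum>g\<in>{g\<in>S. h < g}. s g - 1)
            + (if h \<in> S then 0 else lft s h - 1 + (\<Sum>g\<in>{g\<in>S. g < h}. s g - 1)))" for h
  have resp: "resp_time s (sched_mv N s B) h \<le> tau h" if h: "h < N" for h
  proof (cases "h \<in> S")
    case True
    have "reads_at s (sched_mv N s B) h (tau h)"
      unfolding tau_def B_def using True sched_read_S[OF pos SN' finS True] by simp
    then show ?thesis unfolding resp_time_def by (rule Least_le)
  next
    case False
    have "reads_at s (sched_mv N s B) h (tau h)"
      unfolding tau_def B_def using False sched_read_late[OF pos SN finS h] by simp
    then show ?thesis unfolding resp_time_def by (rule Least_le)
  qed
  have "v N s R ff (FGS N s R ff) = (\<Sum>q\<in>R. resp_time s (sched_mv N s B) (ff q))"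
    unfolding v_def total_resp_def FG ..
  also have "\<dots> \<le> (\<Sum>q\<in>R. tau (ff q))"
    by (rule sum_mono) (use resp Rl in blast)
  also have "\<dots> = (\<Sum>h<N. ?n h * tau h)" by (rule sum_by_file[OF finR Rl])
  also have "\<dots> = (\<Sum>h<N. ?n h * (?m - lft s h)) + 2 * (\<Sum>h<N. ?n h * rho h)"
  proof -
    have "(\<Sum>h<N. ?n h * tau h) = (\<Sum>h<N. ?n h * (?m - lft s h) + 2 * (?n h * rho h))"
    proof (rule sum.cong)
      fix h assume "h \<in> {..<N}"
      then have "tau h = (?m - lft s h) + 2 * rho h"
        unfolding tau_def rho_def using tau_eq[OF pos SN' finS] by simp
      then show "?n h * tau h = ?n h * (?m - lft s h) + 2 * (?n h * rho h)" by (simp add: algebra_simps)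
    qed simp
    then show ?thesis by (simp add: sum.distrib sum_distrib_left)
  qed
  also have "\<dots> \<le> 3 * (\<Sum>h<N. ?n h * (?m - lft s h))"
  proof -
    have "(\<Sum>h<N. ?n h * rho h) \<le> (\<Sum>h<N. ?n h * (?m - lft s h))"
      unfolding rho_def
      by (rule core_bound[OF pos GS_files_def[unfolded Collect_conj_eq[symmetric]] SG])
         (use inv in \<open>simp add: Qinv_def Qlhs_def Qrhs_def\<close>)
    then show ?thesis by simp
  qed
  also have "(\<Sum>h<N. ?n h * (?m - lft s h)) = (\<Sum>q\<in>R. ?m - lft s (ff q))"
    by (rule sum_by_file[OF finR Rl, symmetric])
  also have "\<dots> \<le> OPT N s R ff" by (rule OPT_lb[OF pos Rl N0])
  finally show ?thesis by simp
qed

end
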